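(* Let $A,B\in\mathbb{P}_d$ and let $X\in\mathbb{C}^{d\times k}$ have full column rank. Then for every $t\in[0,1]$, $$\operatorname{tr} X^*(A\#_tB)X\le[\operatorname{tr}X^*AX]^{1-t}[\operatorname{tr}X^*BX]^{t}.$$
   Context: $\mathbb{P}_d$ denotes the set of $d\times d$ Hermitian positive definite matrices, and $A\#_tB:=A^{1/2}(A^{-1/2}BA^{-1/2})^tA^{1/2}$ for $A,B\in\mathbb{P}_d$, $t\in[0,1]$. *)

theory Defs
  imports "HOL-Analysis.Analysis"
begin

definition cadj :: "complex^'n^'m \<Rightarrow> complex^'m^'n" where
  "cadj M = (\<chi> i j. cnj (M $ j $ i))"

definition hermitian :: "complex^'n^'n \<Rightarrow> bool" where
  "hermitian M \<longleftrightarrow> cadj M = M"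

definition posdef :: "complex^'n^'n \<Rightarrow> bool" where
  "posdef M \<longleftrightarrow> hermitian M \<and>
     (\<forall>x::complex^'n. x \<noteq> 0 \<longrightarrow> 0 < Re (\<Sum>i\<in>UNIV. cnj (x $ i) * (M *v x) $ i))"

definition unitary :: "complex^'n^'n \<Rightarrow> bool" where
  "unitary U \<longleftrightarrow> cadj U ** U = mat 1"

definition rdiag :: "('n \<Rightarrow> real) \<Rightarrow> complex^'n^'n" where
  "rdiag d = (\<chi> i j. if i = j then complex_of_real (d i) else 0)"

text \<open>Real power of a positive definite matrix via spectral decomposition
  M = U diag(lambda) U*, M^t = U diag(lambda^t) U* (independent of the choice).\<close>
definition mpowr :: "complex^'n^'n \<Rightarrow> real \<Rightarrow> complex^'n^'n" where
  "mpowr M t = (SOME P. \<exists>U d. unitary U \<and> (\<forall>i. 0 < d i) \<and>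
       M = U ** rdiag d ** cadj U \<and> P = U ** rdiag (\<lambda>i. d i powr t) ** cadj U)"

definition gmean :: "complex^'n^'n \<Rightarrow> real \<Rightarrow> complex^'n^'n \<Rightarrow> complex^'n^'n" where
  "gmean A t B = mpowr A (1/2) ** mpowr (mpowr A (-1/2) ** B ** mpowr A (-1/2)) t ** mpowr A (1/2)"

end

theory Submission
  imports Defs
begin


definition cinner :: "complex^'n \<Rightarrow> complex^'n \<Rightarrow> complex" where
  "cinner x y = (\<Sum>i\<in>UNIV. cnj (x$i) * y$i)"

lemma sum_delta_l: "(\<Sum>k\<in>UNIV. (if i = k then c k else 0) * (b (k::_::finite)::complex)) = c i * b i"
proof -
  have "(\<lambda>k. (if i = k then c k else 0) * b k) = (\<lambda>k. if i = k then c k * b k else 0)" by auto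
  then show ?thesis by (simp only:) simp
qed
lemma sum_delta_r: "(\<Sum>k\<in>UNIV. (b (k::_::finite)::complex) * (if k = j then c k else 0)) = b j * c j"
proof -
  have "(\<lambda>k. b k * (if k = j then c k else 0)) = (\<lambda>k. if k = j then b k * c k else 0)" by auto
  then show ?thesis by (simp only:) simp
qed

lemma cadj_cadj[simp]: "cadj (cadj M) = M"
  by (simp add: cadj_def vec_eq_iff)

lemma cadj_mult: "cadj (A ** B) = cadj B ** cadj A"
  by (simp add: cadj_def vec_eq_iff matrix_matrix_mult_def mult.commute)

lemma cadj_rdiag[simp]: "cadj (rdiag f) = rdiag f"
  by (simp add: cadj_def rdiag_def vec_eq_iff)

lemma rdiag_left: "(rdiag f ** M) $ i $ j = complex_of_real (f i) * M $ i $ j"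
  unfolding rdiag_def matrix_matrix_mult_def by (simp add: sum_delta_l)

lemma rdiag_right: "(M ** rdiag f) $ i $ j = M $ i $ j * complex_of_real (f j)"
  unfolding rdiag_def matrix_matrix_mult_def by (simp add: sum_delta_r)

lemma rdiag_mult: "rdiag f ** rdiag g = rdiag (\<lambda>i. f i * g i)"
  by (simp add: vec_eq_iff rdiag_left) (simp add: rdiag_def)

lemma rdiag_1: "rdiag (\<lambda>_. 1) = mat 1"
  by (simp add: rdiag_def mat_def vec_eq_iff)

lemma unitary_right: "unitary U \<Longrightarrow> U ** cadj U = mat 1"
  unfolding unitary_def using matrix_left_right_inverse by blast



lemma mul_cancel_r: "A ** B = mat 1 \<Longrightarrow> X ** A ** B = X"
  by (metis matrix_mul_assoc matrix_mul_rid)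

lemma fc_unique:
  assumes U: "unitary U" and V: "unitary V"
    and eq: "U ** rdiag a ** cadj U = V ** rdiag b ** cadj V"
  shows "U ** rdiag (\<lambda>i. f (a i)) ** cadj U = V ** rdiag (\<lambda>i. f (b i)) ** cadj V"
proof -
  have uU: "cadj U ** U = mat 1" and uV: "cadj V ** V = mat 1" using U V unfolding unitary_def by auto
  have uU': "U ** cadj U = mat 1" and uV': "V ** cadj V = mat 1" using U V unitary_right by auto
  define W where "W = cadj U ** V"
  have "rdiag a ** W = cadj U ** (U ** rdiag a ** cadj U) ** V"
    by (simp add: W_def matrix_mul_assoc uU)
  also have "\<dots> = cadj U ** (V ** rdiag b ** cadj V) ** V" by (simp add: eq)
  also have "\<dots> = W ** rdiag b"
    by (simp add: W_def matrix_mul_assoc mul_cancel_r[OF uV])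
  finally have 1: "rdiag a ** W = W ** rdiag b" .
  have 2: "rdiag (\<lambda>i. f (a i)) ** W = W ** rdiag (\<lambda>i. f (b i))"
  proof -
    { fix i j
      have "complex_of_real (a i) * W $ i $ j = W $ i $ j * complex_of_real (b j)"
        using 1 by (metis rdiag_left rdiag_right)
      hence "W $ i $ j = 0 \<or> a i = b j" by (auto simp: mult.commute)
      hence "complex_of_real (f (a i)) * W $ i $ j = W $ i $ j * complex_of_real (f (b j))"
        by auto }
    thus ?thesis by (simp add: vec_eq_iff rdiag_left rdiag_right)
  qed
  have "U ** rdiag (\<lambda>i. f (a i)) ** cadj U = U ** (rdiag (\<lambda>i. f (a i)) ** W) ** cadj V"
    by (simp add: W_def matrix_mul_assoc mul_cancel_r[OF uV'])
  also have "\<dots> = U ** (W ** rdiag (\<lambda>i. f (b i))) ** cadj V" by (simp add: 2)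
  also have "\<dots> = V ** rdiag (\<lambda>i. f (b i)) ** cadj V"
    by (simp add: W_def matrix_mul_assoc uU')
  finally show ?thesis .
qed

lemma mpowr_eq:
  assumes U: "unitary U" and d: "\<forall>i. 0 < d i" and M: "M = U ** rdiag d ** cadj U"
  shows "mpowr M t = U ** rdiag (\<lambda>i. d i powr t) ** cadj U"
proof -
  let ?P = "\<lambda>P. \<exists>U d. unitary U \<and> (\<forall>i. 0 < d i) \<and>
       M = U ** rdiag d ** cadj U \<and> P = U ** rdiag (\<lambda>i. d i powr t) ** cadj U"
  have "?P (U ** rdiag (\<lambda>i. d i powr t) ** cadj U)" using assms by blast
  hence "?P (mpowr M t)" unfolding mpowr_def by (rule someI)
  then obtain U' d' where U': "unitary U'" and "M = U' ** rdiag d' ** cadj U'"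
    and P: "mpowr M t = U' ** rdiag (\<lambda>i. d' i powr t) ** cadj U'" by blast
  with M have "U' ** rdiag d' ** cadj U' = U ** rdiag d ** cadj U" by simp
  from fc_unique[OF U' U this, of "\<lambda>x. x powr t"] P show ?thesis by simp
qed

lemma unitary_conj:
  assumes U: "unitary U"
  shows "(U ** rdiag f ** cadj U) ** (U ** rdiag g ** cadj U) = U ** rdiag (\<lambda>i. f i * g i) ** cadj U"
proof -
  have uU: "cadj U ** U = mat 1" using U unfolding unitary_def by auto
  have "(U ** rdiag f ** cadj U) ** (U ** rdiag g ** cadj U) = U ** rdiag f ** (cadj U ** U) ** rdiag g ** cadj U"
    by (simp add: matrix_mul_assoc)
  also have "\<dots> = U ** (rdiag f ** rdiag g) ** cadj U" by (simp add: uU matrix_mul_assoc)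
  finally show ?thesis by (simp add: rdiag_mult)
qed



lemma cinner_commute: "cinner y x = cnj (cinner x y)"
  by (simp add: cinner_def mult.commute)

lemma cinner_add_right[simp]: "cinner x (y + z) = cinner x y + cinner x z"
  by (simp add: cinner_def distrib_left sum.distrib)
lemma cinner_add_left[simp]: "cinner (x + y) z = cinner x z + cinner y z"
  by (simp add: cinner_def distrib_right sum.distrib)
lemma cinner_scale_right[simp]: "cinner x (c *s y) = c * cinner x y"
  by (simp add: cinner_def sum_distrib_left mult.left_commute)
lemma cinner_scale_left[simp]: "cinner (c *s x) y = cnj c * cinner x y"
  by (simp add: cinner_def sum_distrib_left mult.assoc)
lemma mv_add[simp]: "(M::complex^'n^'m) *v (x + y) = M *v x + M *v y"
  by (simp add: matrix_vector_mult_def vec_eq_iff distrib_left sum.distrib)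
lemma mv_scale[simp]: "(M::complex^'n^'m) *v (c *s y) = c *s (M *v y)"
  by (simp add: matrix_vector_mult_def vec_eq_iff sum_distrib_left mult.left_commute)

lemma cinner_hermitian:
  assumes "hermitian M"
  shows "cinner x (M *v y) = cinner (M *v x) y"
proof -
  have Mc: "\<And>i j. cnj (M $ j $ i) = M $ i $ j"
    using assms unfolding hermitian_def cadj_def by (metis vec_lambda_beta)
  have "cinner (M *v x) y = (\<Sum>i\<in>UNIV. \<Sum>j\<in>UNIV. cnj (M$i$j) * cnj (x$j) * y$i)"
    by (simp add: cinner_def matrix_vector_mult_def sum_distrib_right)
  also have "\<dots> = (\<Sum>j\<in>UNIV. \<Sum>i\<in>UNIV. cnj (M$i$j) * cnj (x$j) * y$i)"
    by (rule sum.swap)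
  also have "\<dots> = cinner x (M *v y)"
    by (simp add: cinner_def matrix_vector_mult_def sum_distrib_left Mc mult.commute mult.left_commute)
  finally show ?thesis by simp
qed

lemma Re_cinner: "Re (cinner x y) = inner x y"
  by (simp add: cinner_def inner_vec_def inner_complex_def)

lemma cinner_self: "cinner x x = complex_of_real ((norm x)^2)"
proof -
  have "Im (cinner x x) = 0" by (simp add: cinner_def)
  moreover have "Re (cinner x x) = (norm x)^2" by (simp add: Re_cinner power2_norm_eq_inner)
  ultimately show ?thesis by (simp add: complex_eq_iff)
qed

lemma cinner_self_eq0: "cinner x x = 0 \<longleftrightarrow> x = 0"
  by (simp add: cinner_self)

lemma ofreal_scale: "complex_of_real r *s x = r *\<^sub>R x"
proof -
  have "\<And>z::complex. r *\<^sub>R z = complex_of_real r * z" by (simp add: scaleR_conv_of_real)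
  then show ?thesis by (simp add: vec_eq_iff)
qed

lemma cont_quad: "continuous_on UNIV (\<lambda>x::complex^'n. Re (cinner x (M *v x)))"
  unfolding cinner_def matrix_vector_mult_def
  by (intro continuous_intros)



lemma cinner_diff_right[simp]: "cinner x (y - z) = cinner x y - cinner x z"
  by (simp add: cinner_def right_diff_distrib sum_subtractf)
lemma cinner_diff_left[simp]: "cinner (x - y) z = cinner x z - cinner y z"
  by (simp add: cinner_def left_diff_distrib sum_subtractf)

lemma quad_zero:
  fixes a b :: real
  assumes "\<And>s. 2 * s * a + s^2 * b \<le> 0"
  shows "a = 0"
proof (rule ccontr)
  assume a: "a \<noteq> 0"
  define e where "e = 1 / (\<bar>b\<bar> + 1)"
  have e: "e > 0" "e * \<bar>b\<bar> < 1" unfolding e_def by (auto simp: field_simps)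
  have "2 * (e*a) * a + (e*a)^2 * b \<le> 0" by (rule assms)
  hence "(e * a^2) * (2 + e * b) \<le> 0" by (simp add: power2_eq_square algebra_simps)
  moreover have "e * a^2 > 0" using a e by simp
  moreover have "2 + e * b > 0"
  proof -
    have "e * (-\<bar>b\<bar>) \<le> e * b" using e(1) by (intro mult_left_mono) auto
    thus ?thesis using e(2) by simp
  qed
  ultimately show False using mult_pos_pos[of "e * a^2" "2 + e * b"] by linarith
qed

lemma eigen_exists:
  fixes M :: "complex^'n^'n" and W :: "(complex^'n) set"
  assumes herm: "hermitian M"
    and sc: "\<And>x c. x \<in> W \<Longrightarrow> c *s x \<in> W"
    and ad: "\<And>x y. x \<in> W \<Longrightarrow> y \<in> W \<Longrightarrow> x + y \<in> W"
    and inv: "\<And>x. x \<in> W \<Longrightarrow> M *v x \<in> W"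
    and cl: "closed W" and w: "w \<in> W" "w \<noteq> 0"
  shows "\<exists>v\<in>W. cinner v v = 1 \<and> M *v v = complex_of_real (Re (cinner v (M *v v))) *s v"
proof -
  define f where "f x = Re (cinner x (M *v x))" for x
  define K where "K = sphere 0 1 \<inter> W"
  have "compact K" unfolding K_def by (intro compact_Int_closed compact_sphere cl)
  moreover have "K \<noteq> {}"
  proof -
    have "(1 / norm w) *\<^sub>R w \<in> W"
      using sc[OF w(1), of "complex_of_real (1/norm w)"] by (simp only: ofreal_scale)
    hence "(1 / norm w) *\<^sub>R w \<in> K" using w by (simp add: K_def)
    thus ?thesis by auto
  qed
  moreover have "continuous_on K f"
    unfolding f_def by (rule continuous_on_subset[OF cont_quad]) auto
  ultimately obtain v where vK: "v \<in> K" and vmax: "\<And>y. y \<in> K \<Longrightarrow> f y \<le> f v"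
    using continuous_attains_sup[of K f] by blast
  have vW: "v \<in> W" and nv: "norm v = 1" using vK unfolding K_def by auto
  have vv: "cinner v v = 1" using nv by (simp add: cinner_self)
  define lam where "lam = f v"
  have fscale: "f (r *\<^sub>R x) = r^2 * f x" for r x
    unfolding f_def ofreal_scale[symmetric] by (simp add: power2_eq_square)
  have bound: "f x \<le> lam * (norm x)^2" if xW: "x \<in> W" for x
  proof (cases "x = 0")
    case True thus ?thesis by (simp add: f_def cinner_def)
  next
    case False
    let ?y = "(1 / norm x) *\<^sub>R x"
    have "?y \<in> W" using sc[OF xW, of "complex_of_real (1/norm x)"] by (simp only: ofreal_scale)
    hence "?y \<in> K" unfolding K_def using False by simp
    hence "f ?y \<le> lam" using vmax lam_def by auto
    hence "(1/norm x)^2 * f x \<le> lam" by (simp add: fscale)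
    thus ?thesis using False by (simp add: field_simps)
  qed
  have herm2: "\<And>x y. cinner x (M *v y) = cinner (M *v x) y" using cinner_hermitian[OF herm] by blast
  have key: "Re (cinner u (M *v v)) = 0" if uW: "u \<in> W" and uv: "cinner v u = 0" for u
  proof -
    define a where "a = Re (cinner u (M *v v))"
    have uv': "cinner u v = 0" using uv cinner_commute[of u v] by simp
    have "2 * s * a + s^2 * (f u - lam * (norm u)^2) \<le> 0" for s
    proof -
      let ?x = "v + complex_of_real s *s u"
      have xW: "?x \<in> W" using ad[OF vW sc[OF uW]] .
      have e1: "cinner v (M *v u) = cnj (cinner u (M *v v))"
        by (simp add: herm2 cinner_commute[of "M *v v"])
      have ex: "cinner ?x (M *v ?x) =
        cinner v (M *v v) + complex_of_real s * (cinner v (M *v u) + cinner u (M *v v)) + complex_of_real (s^2) * cinner u (M *v u)"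
        by (simp add: distrib_left power2_eq_square mult.assoc)
      have "f ?x = lam + s * (Re (cinner v (M *v u)) + Re (cinner u (M *v v))) + s^2 * f u"
        unfolding f_def lam_def ex by simp
      also have "\<dots> = lam + 2 * s * a + s^2 * f u" unfolding a_def e1 by simp
      finally have fx: "f ?x = lam + 2 * s * a + s^2 * f u" .
      have ex2: "cinner ?x ?x = cinner v v + complex_of_real s * (cinner v u + cinner u v) + complex_of_real (s^2) * cinner u u"
        by (simp add: distrib_left power2_eq_square mult.assoc)
      have "complex_of_real ((norm ?x)^2) = complex_of_real (1 + s^2 * (norm u)^2)"
        unfolding cinner_self[symmetric] ex2 by (simp add: nv uv uv' cinner_self)
      hence nx: "(norm ?x)^2 = 1 + s^2 * (norm u)^2" using of_real_eq_iff by blast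
      have "lam + 2 * s * a + s^2 * f u \<le> lam * (1 + s^2 * (norm u)^2)"
        using bound[OF xW] fx nx by simp
      thus ?thesis by (simp add: ring_distribs mult.left_commute)
    qed
    thus ?thesis using quad_zero unfolding a_def by blast
  qed
  have key2: "cinner u (M *v v) = 0" if uW: "u \<in> W" and uv: "cinner v u = 0" for u
  proof -
    have "Re (cinner (\<i> *s u) (M *v v)) = 0" using key[OF sc[OF uW, of "\<i>"]] uv by simp
    hence "Im (cinner u (M *v v)) = 0" by simp
    with key[OF uW uv] show ?thesis by (simp add: complex_eq_iff)
  qed
  define mu where "mu = cinner v (M *v v)"
  have mureal: "mu = complex_of_real (Re mu)"
  proof -
    have "mu = cnj mu" unfolding mu_def using herm2[of v v] cinner_commute[of "M *v v" v] by simp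
    hence "Im mu = 0" by (simp add: complex_eq_iff)
    thus ?thesis by (simp add: complex_eq_iff)
  qed
  define z where "z = M *v v + (- mu) *s v"
  have zW: "z \<in> W" unfolding z_def using ad[OF inv[OF vW] sc[OF vW]] .
  have "cinner v z = 0" unfolding z_def mu_def by (simp add: vv)
  hence zM: "cinner z (M *v v) = 0" using key2[OF zW] by simp
  have zz: "z = M *v v - mu *s v" unfolding z_def by (simp add: vec_eq_iff vector_scalar_mult_def)
  have "cinner z z = cinner z (M *v v) - mu * cinner z v"
    by (subst (2) zz) simp
  also have "\<dots> = 0" using zM \<open>cinner v z = 0\<close> cinner_commute[of z v] by simp
  finally have "z = 0" by (simp add: cinner_self_eq0)
  hence "M *v v = mu *s v" unfolding zz by simp
  hence "M *v v = complex_of_real (Re (cinner v (M *v v))) *s v" using mureal mu_def by simp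
  thus ?thesis using vW vv by blast
qed



lemma cont_cinner: "continuous_on UNIV (\<lambda>x::complex^'n. cinner a x)"
  unfolding cinner_def by (intro continuous_intros)

lemma ex_basis:
  fixes M :: "complex^'n^'n" and S :: "'n set"
  assumes herm: "hermitian M"
  shows "\<exists>u lam. (\<forall>i\<in>S. \<forall>j\<in>S. cinner (u i) (u j) = (if i = j then 1 else 0)) \<and>
     (\<forall>i\<in>S. M *v u i = complex_of_real (lam i) *s u i \<and> lam i = Re (cinner (u i) (M *v u i)))"
proof -
  have "finite S" by simp
  thus ?thesis
  proof (induction S rule: finite_induct)
    case empty
    then show ?case by simp
  next
    case (insert k S)
    then obtain u lam where orth: "\<forall>i\<in>S. \<forall>j\<in>S. cinner (u i) (u j) = (if i = j then 1 else 0)"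
      and eig: "\<forall>i\<in>S. M *v u i = complex_of_real (lam i) *s u i \<and> lam i = Re (cinner (u i) (M *v u i))"
      by blast
    define W where "W = {w. \<forall>j\<in>S. cinner (u j) w = 0}"
    have herm2: "\<And>x y. cinner x (M *v y) = cinner (M *v x) y" using cinner_hermitian[OF herm] by blast
    have sc: "\<And>x c. x \<in> W \<Longrightarrow> c *s x \<in> W" unfolding W_def by simp
    have ad: "\<And>x y. x \<in> W \<Longrightarrow> y \<in> W \<Longrightarrow> x + y \<in> W" unfolding W_def by simp
    have eigv: "\<forall>i\<in>S. M *v u i = complex_of_real (lam i) *s u i" using eig by blast
    have inv: "\<And>x. x \<in> W \<Longrightarrow> M *v x \<in> W"
      unfolding W_def using eigv by (simp add: herm2)
    have cl: "closed W"
    proof -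
      have "W = (\<Inter>j\<in>S. {w. cinner (u j) w = 0})" unfolding W_def by auto
      thus ?thesis by (auto intro!: closed_INT closed_Collect_eq cont_cinner continuous_on_const)
    qed
    have "\<exists>w\<in>W. w \<noteq> 0"
    proof -
      define B where "B = (\<lambda>j. u j) ` S \<union> (\<lambda>j. \<i> *s u j) ` S"
      have fB: "finite B" unfolding B_def using insert by simp
      have "card B \<le> card ((\<lambda>j. u j) ` S) + card ((\<lambda>j. \<i> *s u j) ` S)" unfolding B_def by (rule card_Un_le)
      also have "\<dots> \<le> card S + card S" using insert(1) by (intro add_mono card_image_le)
      finally have "card B \<le> card S + card S" .
      moreover have "S \<subset> UNIV" using insert(2) by blast
      hence "card S < CARD('n)" by (intro psubset_card_mono) simp_all
      ultimately have "dim B < DIM(complex^'n)" using dim_le_card'[OF fB] by simp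
      then obtain w where w0: "w \<noteq> 0" and wo: "\<And>y. y \<in> span B \<Longrightarrow> orthogonal w y"
        by (rule orthogonal_to_subspace_exists) blast+
      have "\<forall>j\<in>S. cinner (u j) w = 0"
      proof
        fix j assume j: "j \<in> S"
        have "orthogonal w (u j)" using wo j by (auto simp: B_def intro: span_base)
        hence 1: "Re (cinner (u j) w) = 0" by (simp add: Re_cinner orthogonal_def inner_commute)
        have "orthogonal w (\<i> *s u j)" using wo j by (auto simp: B_def intro: span_base)
        hence "Re (cinner (\<i> *s u j) w) = 0" unfolding Re_cinner by (simp add: orthogonal_def inner_commute)
        hence "Im (cinner (u j) w) = 0" by simp
        with 1 show "cinner (u j) w = 0" by (simp add: complex_eq_iff)
      qed
      hence "w \<in> W" unfolding W_def by simp
      with w0 show ?thesis by blast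
    qed
    then obtain w where "w \<in> W" "w \<noteq> 0" by blast
    from eigen_exists[OF herm sc ad inv cl this] obtain v where vW: "v \<in> W"
      and vv: "cinner v v = 1" and vM: "M *v v = complex_of_real (Re (cinner v (M *v v))) *s v" by blast
    define u' where "u' = u(k := v)"
    define lam' where "lam' = lam(k := Re (cinner v (M *v v)))"
    have vu: "\<And>j. j \<in> S \<Longrightarrow> cinner (u j) v = 0" using vW unfolding W_def by blast
    have uv: "\<And>j. j \<in> S \<Longrightarrow> cinner v (u j) = 0" using vu cinner_commute[of v] by simp
    have "\<forall>i\<in>insert k S. \<forall>j\<in>insert k S. cinner (u' i) (u' j) = (if i = j then 1 else 0)"
    proof (intro ballI)
      fix i j assume i: "i \<in> insert k S" and j: "j \<in> insert k S"
      show "cinner (u' i) (u' j) = (if i = j then 1 else 0)"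
      proof (cases "i = k")
        case True
        show ?thesis
        proof (cases "j = k")
          case True
          thus ?thesis using \<open>i = k\<close> vv by (simp add: u'_def)
        next
          case False
          hence "j \<in> S" using j by simp
          thus ?thesis using \<open>i = k\<close> False uv by (simp add: u'_def)
        qed
      next
        case False
        hence iS: "i \<in> S" using i by simp
        show ?thesis
        proof (cases "j = k")
          case True
          thus ?thesis using iS False vu by (simp add: u'_def)
        next
          case False
          hence "j \<in> S" using j by simp
          thus ?thesis using iS \<open>i \<noteq> k\<close> False orth by (simp add: u'_def)
        qed
      qed
    qed
    moreover have "\<forall>i\<in>insert k S. M *v u' i = complex_of_real (lam' i) *s u' i \<and> lam' i = Re (cinner (u' i) (M *v u' i))"
    proof
      fix i assume i: "i \<in> insert k S"
      show "M *v u' i = complex_of_real (lam' i) *s u' i \<and> lam' i = Re (cinner (u' i) (M *v u' i))"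
      proof (cases "i = k")
        case True
        have "u' i = v" "lam' i = Re (cinner v (M *v v))" using True by (simp_all add: u'_def lam'_def)
        then show ?thesis using vM by (simp only:)
      next
        case False
        hence iS: "i \<in> S" using i by simp
        have e1: "u' i = u i" and e2: "lam' i = lam i" using False by (simp_all add: u'_def lam'_def)
        show ?thesis unfolding e1 e2 using eig iS by blast
      qed
    qed
    ultimately show ?case by blast
  qed
qed

lemma spectral:
  fixes M :: "complex^'n^'n"
  assumes herm: "hermitian M"
  shows "\<exists>U lam. unitary U \<and> M = U ** rdiag lam ** cadj U \<and>
      (\<forall>i. \<exists>x. cinner x x = 1 \<and> lam i = Re (cinner x (M *v x)))"
proof -
  obtain u :: "'n \<Rightarrow> complex^'n" and lam :: "'n \<Rightarrow> real" where orth0: "\<forall>i\<in>UNIV. \<forall>j\<in>UNIV. cinner (u i) (u j) = (if i = j then 1 else 0)"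
      and eig0: "\<forall>i\<in>UNIV. M *v u i = complex_of_real (lam i) *s u i \<and> lam i = Re (cinner (u i) (M *v u i))"
    using ex_basis[OF herm, of UNIV] by blast
  have orth: "\<forall>i j. cinner (u i) (u j) = (if i = j then 1 else 0)" using orth0 by blast
  have eig: "\<forall>i. M *v u i = complex_of_real (lam i) *s u i \<and> lam i = Re (cinner (u i) (M *v u i))" using eig0 by blast
  define U :: "complex^'n^'n" where "U = (\<chi> r c. u c $ r)"
  have "cadj U ** U = mat 1"
    using orth by (simp add: U_def cadj_def matrix_matrix_mult_def mat_def vec_eq_iff cinner_def)
  hence uU: "unitary U" by (simp add: unitary_def)
  have "M ** U = U ** rdiag lam"
  proof -
    { fix r c
      have "(M ** U) $ r $ c = (M *v u c) $ r"
        by (simp add: U_def matrix_matrix_mult_def matrix_vector_mult_def)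
      also have "\<dots> = U $ r $ c * complex_of_real (lam c)" using eig[rule_format, of c, THEN conjunct1]
        by (simp add: U_def vector_scalar_mult_def mult.commute)
      finally have "(M ** U) $ r $ c = (U ** rdiag lam) $ r $ c" by (simp add: rdiag_right) }
    thus ?thesis by (simp add: vec_eq_iff)
  qed
  hence "M = U ** rdiag lam ** cadj U"
    using mul_cancel_r[OF unitary_right[OF uU], of M] by (simp add: matrix_mul_assoc)
  moreover have "\<forall>i. \<exists>x. cinner x x = 1 \<and> lam i = Re (cinner x (M *v x))"
  proof
    fix i show "\<exists>x. cinner x x = 1 \<and> lam i = Re (cinner x (M *v x))"
      using orth[rule_format, of i i] eig[rule_format, of i, THEN conjunct2] by (intro exI[of _ "u i"]) simp
  qed
  ultimately show ?thesis using uU by blast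
qed



lemma holder_sum:
  fixes w c :: "'a \<Rightarrow> real"
  assumes fin: "finite I" and w: "\<And>i. i \<in> I \<Longrightarrow> 0 \<le> w i" and c: "\<And>i. i \<in> I \<Longrightarrow> 0 < c i"
    and t: "0 \<le> t" "t \<le> 1"
  shows "(\<Sum>i\<in>I. c i powr t * w i) \<le> (\<Sum>i\<in>I. w i) powr (1 - t) * (\<Sum>i\<in>I. c i * w i) powr t"
proof -
  define P where "P = (\<Sum>i\<in>I. w i)"
  define Q where "Q = (\<Sum>i\<in>I. c i * w i)"
  have P0: "P \<ge> 0" unfolding P_def using w by (simp add: sum_nonneg)
  have Q0: "Q \<ge> 0" unfolding Q_def using w c by (simp add: sum_nonneg less_imp_le)
  show ?thesis
  proof (cases "P = 0")
    case True
    hence "\<forall>i\<in>I. w i = 0" using sum_nonneg_eq_0_iff[OF fin] w unfolding P_def by blast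
    hence "(\<Sum>i\<in>I. c i powr t * w i) = 0" by simp
    thus ?thesis unfolding P_def[symmetric] Q_def[symmetric] by simp
  next
    case False
    hence Pp: "P > 0" using P0 by simp
    have Qp: "Q > 0"
    proof (rule ccontr)
      assume "\<not> Q > 0"
      hence "Q = 0" using Q0 by simp
      hence "\<forall>i\<in>I. c i * w i = 0" using sum_nonneg_eq_0_iff[OF fin] w c unfolding Q_def
        by (meson less_imp_le mult_nonneg_nonneg)
      hence "\<forall>i\<in>I. w i = 0" using c by (metis less_irrefl mult_eq_0_iff)
      hence "P = 0" unfolding P_def by simp
      thus False using Pp by simp
    qed
    define R where "R = Q / P"
    have Rp: "R > 0" unfolding R_def using Pp Qp by simp
    have trm: "c i powr t * w i \<le> R powr t * ((1 - t) * w i + t * (c i * w i) / R)" if i: "i \<in> I" for i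
    proof -
      have ci: "c i > 0" using c i by simp
      have "1 powr (1 - t) * (c i / R) powr t \<le> (1 - t) * 1 + t * (c i / R)"
        using Youngs_inequality_0[of "1 - t" t 1 "c i / R"] t ci Rp by simp
      hence y: "(c i / R) powr t \<le> (1 - t) + t * (c i / R)" by simp
      have "c i powr t = R powr t * (c i / R) powr t"
        using Rp ci by (simp add: powr_mult[symmetric])
      hence "c i powr t \<le> R powr t * ((1 - t) + t * (c i / R))"
        using y Rp by (simp add: mult_left_mono)
      hence "c i powr t * w i \<le> R powr t * ((1 - t) + t * (c i / R)) * w i"
        using w[OF i] by (simp add: mult_right_mono)
      thus ?thesis by (simp add: algebra_simps)
    qed
    have "(\<Sum>i\<in>I. c i powr t * w i) \<le> (\<Sum>i\<in>I. R powr t * ((1 - t) * w i + t * (c i * w i) / R))"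
      using trm by (rule sum_mono)
    also have "\<dots> = (\<Sum>i\<in>I. (R powr t * (1 - t)) * w i + (R powr t * t / R) * (c i * w i))"
      by (rule sum.cong) (auto simp: algebra_simps)
    also have "\<dots> = (R powr t * (1 - t)) * P + (R powr t * t / R) * Q"
      unfolding P_def Q_def by (simp add: sum.distrib sum_distrib_left)
    also have "\<dots> = R powr t * P"
      using Pp Qp unfolding R_def by (simp add: field_simps)
    also have "\<dots> = P powr (1 - t) * Q powr t"
      unfolding R_def using Pp Qp by (simp add: powr_divide powr_diff field_simps)
    finally show ?thesis unfolding P_def Q_def .
  qed
qed

lemma trace_form:
  fixes Y :: "complex^'k^'d"
  shows "Re (trace (cadj Y ** rdiag f ** Y)) = (\<Sum>i\<in>UNIV. f i * (\<Sum>j\<in>UNIV. (cmod (Y$i$j))^2))"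
proof -
  have "trace (cadj Y ** rdiag f ** Y) = (\<Sum>j\<in>UNIV. \<Sum>i\<in>UNIV. complex_of_real (f i) * (Y$i$j * cnj (Y$i$j)))"
  proof -
    have e: "(cadj Y ** rdiag f ** Y)$j$j = (\<Sum>i\<in>UNIV. (cadj Y ** rdiag f)$j$i * Y$i$j)" for j
      by (simp add: matrix_matrix_mult_def)
    have e2: "cadj Y $ j $ i = cnj (Y$i$j)" for i j by (simp add: cadj_def)
    show ?thesis unfolding trace_def e rdiag_right e2 by (simp add: mult.commute mult.left_commute)
  qed
  also have "\<dots> = (\<Sum>j\<in>UNIV. \<Sum>i\<in>UNIV. complex_of_real (f i * (cmod (Y$i$j))^2))"
    by (simp add: complex_norm_square[symmetric])
  also have "\<dots> = complex_of_real (\<Sum>i\<in>UNIV. f i * (\<Sum>j\<in>UNIV. (cmod (Y$i$j))^2))"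
    by (subst sum.swap) (simp add: sum_distrib_left)
  finally show ?thesis by simp
qed

lemma posdef_herm: "posdef M \<Longrightarrow> hermitian M" by (simp add: posdef_def)
lemma posdef_pos: "posdef M \<Longrightarrow> x \<noteq> 0 \<Longrightarrow> 0 < Re (cinner x (M *v x))"
  by (simp add: posdef_def cinner_def)

lemma posdef_decomp:
  assumes "posdef M"
  shows "\<exists>U d. unitary U \<and> (\<forall>i. 0 < d i) \<and> M = U ** rdiag d ** cadj U"
proof -
  obtain U lam where "unitary U" "M = U ** rdiag lam ** cadj U"
    and l: "\<forall>i. \<exists>x. cinner x x = 1 \<and> lam i = Re (cinner x (M *v x))"
    using spectral[OF posdef_herm[OF assms]] by blast
  moreover have "\<forall>i. 0 < lam i"
  proof
    fix i
    obtain x where "cinner x x = 1" "lam i = Re (cinner x (M *v x))" using l by blast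
    moreover have "x \<noteq> 0" using \<open>cinner x x = 1\<close> by (auto simp: cinner_def)
    ultimately show "0 < lam i" using posdef_pos[OF assms] by simp
  qed
  ultimately show ?thesis by blast
qed

lemma cadj_conj: "cadj (U ** rdiag f ** cadj U) = U ** rdiag f ** cadj U"
  by (simp add: cadj_mult matrix_mul_assoc)



theorem corollary5:
  fixes A B :: "complex^'d^'d" and X :: "complex^'k^'d" and t :: real
  assumes "posdef A" and "posdef B"
    and "rank X = CARD('k)"
    and "0 \<le> t" and "t \<le> 1"
  shows "Re (trace (cadj X ** gmean A t B ** X))
           \<le> Re (trace (cadj X ** A ** X)) powr (1 - t) * Re (trace (cadj X ** B ** X)) powr t"
proof -
  obtain U a where U: "unitary U" and a: "\<forall>i. 0 < a i" and A: "A = U ** rdiag a ** cadj U"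
    using posdef_decomp[OF assms(1)] by blast
  have uU': "U ** cadj U = mat 1" using unitary_right[OF U] .
  define S where "S = U ** rdiag (\<lambda>i. a i powr (1/2)) ** cadj U"
  define T where "T = U ** rdiag (\<lambda>i. a i powr (-1/2)) ** cadj U"
  have Sm: "mpowr A (1/2) = S" using mpowr_eq[OF U a A] by (simp add: S_def)
  have Tm: "mpowr A (-1/2) = T" using mpowr_eq[OF U a A] by (simp add: T_def)
  have ST: "S ** T = mat 1"
  proof -
    have "(\<lambda>i. a i powr (1/2) * a i powr (-1/2)) = (\<lambda>i. 1)" (is "?f = ?g")
    proof (rule ext)
      fix i have ai: "0 < a i" using a by blast
      thus "?f i = ?g i" by (simp add: powr_add[symmetric])
    qed
    thus ?thesis unfolding S_def T_def unitary_conj[OF U] by (simp add: rdiag_1 uU')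
  qed
  have TS: "T ** S = mat 1"
  proof -
    have "(\<lambda>i. a i powr (-1/2) * a i powr (1/2)) = (\<lambda>i. 1)" (is "?f = ?g")
    proof (rule ext)
      fix i have ai: "0 < a i" using a by blast
      thus "?f i = ?g i" by (simp add: powr_add[symmetric])
    qed
    thus ?thesis unfolding S_def T_def unitary_conj[OF U] by (simp add: rdiag_1 uU')
  qed
  have SS: "S ** S = A"
  proof -
    have "(\<lambda>i. a i powr (1/2) * a i powr (1/2)) = a" (is "?f = ?g")
    proof (rule ext)
      fix i have ai: "0 < a i" using a by blast
      thus "?f i = ?g i" by (simp add: powr_add[symmetric])
    qed
    thus ?thesis unfolding S_def unitary_conj[OF U] A by simp
  qed
  have hS: "cadj S = S" unfolding S_def by (rule cadj_conj)
  have hT: "cadj T = T" unfolding T_def by (rule cadj_conj)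
  have hB: "cadj B = B" using assms(2) by (simp add: posdef_def hermitian_def)
  define C where "C = T ** B ** T"
  have pC: "posdef C"
  proof -
    have hC: "hermitian C" unfolding C_def hermitian_def
      by (simp add: cadj_mult hT hB matrix_mul_assoc)
    have "0 < Re (cinner x (C *v x))" if x: "x \<noteq> 0" for x
    proof -
      have Tx: "T *v x \<noteq> 0"
      proof
        assume "T *v x = 0"
        hence "S *v (T *v x) = 0" by simp
        hence "x = 0" by (simp add: matrix_vector_mul_assoc ST)
        thus False using x by simp
      qed
      have "cinner x (C *v x) = cinner (T *v x) (B *v (T *v x))"
        unfolding C_def
        using cinner_hermitian[of T x "B *v (T *v x)"] hT
        by (simp add: hermitian_def matrix_vector_mul_assoc matrix_mul_assoc)
      thus ?thesis using posdef_pos[OF assms(2) Tx] by simp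
    qed
    thus ?thesis using hC unfolding posdef_def cinner_def by blast
  qed
  obtain V c where V: "unitary V" and c: "\<forall>i. 0 < c i" and C: "C = V ** rdiag c ** cadj V"
    using posdef_decomp[OF pC] by blast
  have uV': "V ** cadj V = mat 1" using unitary_right[OF V] .
  have G: "mpowr C t = V ** rdiag (\<lambda>i. c i powr t) ** cadj V" using mpowr_eq[OF V c C] .
  have gm: "gmean A t B = S ** (V ** rdiag (\<lambda>i. c i powr t) ** cadj V) ** S"
    unfolding gmean_def Sm Tm C_def[symmetric] G ..
  have BB: "B = S ** C ** S"
  proof -
    have "S ** C ** S = (S ** T) ** B ** (T ** S)" unfolding C_def by (simp add: matrix_mul_assoc)
    thus ?thesis by (simp add: ST TS)
  qed
  define Y where "Y = cadj V ** S ** X"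
  have cY: "cadj Y = cadj X ** S ** V" unfolding Y_def by (simp add: cadj_mult hS matrix_mul_assoc)
  have e1: "cadj X ** gmean A t B ** X = cadj Y ** rdiag (\<lambda>i. c i powr t) ** Y"
    unfolding gm cY unfolding Y_def by (simp add: matrix_mul_assoc)
  have e2: "cadj X ** A ** X = cadj Y ** rdiag (\<lambda>i. 1) ** Y"
    unfolding cY rdiag_1 SS[symmetric] unfolding Y_def by (simp add: matrix_mul_assoc mul_cancel_r[OF uV'])
  have e3: "cadj X ** B ** X = cadj Y ** rdiag c ** Y"
    unfolding cY BB C unfolding Y_def by (simp add: matrix_mul_assoc)
  define w where "w i = (\<Sum>j\<in>UNIV. (cmod (Y$i$j))^2)" for i
  have "(\<Sum>i\<in>UNIV. c i powr t * w i) \<le> (\<Sum>i\<in>UNIV. w i) powr (1 - t) * (\<Sum>i\<in>UNIV. c i * w i) powr t"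
    by (rule holder_sum) (use c assms(4,5) in \<open>auto simp: w_def intro: sum_nonneg\<close>)
  thus ?thesis unfolding e1 e2 e3 trace_form w_def by simp
qed


end
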